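(* Let $r\ge 1$ and let $H$ be a graph with at least one edge. The join of $rK_1$ and $H$ is well-bicovered if and only if $H$ is both well-covered and well-bicovered, and $b(H)=r+\alpha(H)$.
   Context: All graphs are finite and simple; "subgraph" means induced subgraph. $rK_1$ is the edgeless graph on $r$ vertices. $b(G)$ denotes the maximum order of an induced bipartite subgraph of $G$. A graph is well-bicovered if every vertex-inclusion-maximal induced bipartite subgraph has the same order. A graph is well-covered if every maximal independent set has the same cardinality, namely the independence number $\alpha$. The join of two graphs is their disjoint union together with all edges between them. *)

theory Defs
  imports Main
begin

type_synonym 'a graph = "'a set \<times> ('a \<Rightarrow> 'a \<Rightarrow> bool)"

definition verts :: "'a graph \<Rightarrow> 'a set" where "verts G = fst G"
definition adj :: "'a graph \<Rightarrow> 'a \<Rightarrow> 'a \<Rightarrow> bool" where "adj G = snd G"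

definition simple_graph :: "'a graph \<Rightarrow> bool" where
  "simple_graph G \<longleftrightarrow> finite (verts G) \<and>
     (\<forall>u v. adj G u v \<longrightarrow> u \<in> verts G \<and> v \<in> verts G \<and> u \<noteq> v \<and> adj G v u)"

definition has_edge :: "'a graph \<Rightarrow> bool" where
  "has_edge G \<longleftrightarrow> (\<exists>u v. adj G u v)"

definition edgeless :: "nat \<Rightarrow> nat graph" where
  "edgeless r = ({..<r}, \<lambda>_ _. False)"

definition graph_join :: "'a graph \<Rightarrow> 'b graph \<Rightarrow> ('a + 'b) graph" where
  "graph_join G H =
     (Inl ` verts G \<union> Inr ` verts H,
      \<lambda>x y. case (x, y) of
          (Inl u, Inl v) \<Rightarrow> adj G u v
        | (Inr u, Inr v) \<Rightarrow> adj H u v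
        | (Inl u, Inr v) \<Rightarrow> u \<in> verts G \<and> v \<in> verts H
        | (Inr u, Inl v) \<Rightarrow> u \<in> verts H \<and> v \<in> verts G)"

definition independent :: "'a graph \<Rightarrow> 'a set \<Rightarrow> bool" where
  "independent G S \<longleftrightarrow> S \<subseteq> verts G \<and> (\<forall>u\<in>S. \<forall>v\<in>S. \<not> adj G u v)"

definition maximal_independent :: "'a graph \<Rightarrow> 'a set \<Rightarrow> bool" where
  "maximal_independent G S \<longleftrightarrow> independent G S \<and>
     (\<forall>T. independent G T \<and> S \<subseteq> T \<longrightarrow> T = S)"

definition alpha :: "'a graph \<Rightarrow> nat" where
  "alpha G = Max (card ` {S. independent G S})"

definition well_covered :: "'a graph \<Rightarrow> bool" where
  "well_covered G \<longleftrightarrow> (\<forall>S. maximal_independent G S \<longrightarrow> card S = alpha G)"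

definition bipartite_set :: "'a graph \<Rightarrow> 'a set \<Rightarrow> bool" where
  "bipartite_set G S \<longleftrightarrow> S \<subseteq> verts G \<and>
     (\<exists>A B. A \<union> B = S \<and> independent G A \<and> independent G B)"

definition maximal_bipartite_set :: "'a graph \<Rightarrow> 'a set \<Rightarrow> bool" where
  "maximal_bipartite_set G S \<longleftrightarrow> bipartite_set G S \<and>
     (\<forall>T. bipartite_set G T \<and> S \<subseteq> T \<longrightarrow> T = S)"

definition bip_num :: "'a graph \<Rightarrow> nat" where
  "bip_num G = Max (card ` {S. bipartite_set G S})"

definition well_bicovered :: "'a graph \<Rightarrow> bool" where
  "well_bicovered G \<longleftrightarrow>
     (\<forall>S T. maximal_bipartite_set G S \<and> maximal_bipartite_set G T \<longrightarrow> card S = card T)"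

end

theory Submission
  imports Defs
begin

lemma join_verts[simp]: "verts (graph_join G H) = Inl ` verts G \<union> Inr ` verts H"
  by (simp add: graph_join_def verts_def)

lemma join_adj[simp]:
  "adj (graph_join G H) (Inl u) (Inl v) = adj G u v"
  "adj (graph_join G H) (Inr a) (Inr b) = adj H a b"
  "adj (graph_join G H) (Inl u) (Inr b) = (u \<in> verts G \<and> b \<in> verts H)"
  "adj (graph_join G H) (Inr a) (Inl v) = (a \<in> verts H \<and> v \<in> verts G)"
  by (simp_all add: graph_join_def adj_def verts_def)

lemma edgeless_simps[simp]: "verts (edgeless r) = {..<r}" "adj (edgeless r) u v = False"
  by (simp_all add: edgeless_def verts_def adj_def)

lemma decomp: "S = Inl ` (Inl -` S) \<union> Inr ` (Inr -` S)"
proof (rule set_eqI)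
  fix x show "x \<in> S \<longleftrightarrow> x \<in> Inl ` (Inl -` S) \<union> Inr ` (Inr -` S)" by (cases x) auto
qed

lemma preimg[simp]: "Inl -` (Inl ` X \<union> Inr ` Y) = X" "Inr -` (Inl ` X \<union> Inr ` Y) = Y"
  by auto

lemma max_attained:
  assumes fin: "finite V" and sub: "\<And>S. P S \<Longrightarrow> S \<subseteq> V" and p0: "P Z"
  shows "\<exists>S. P S \<and> (\<forall>T. P T \<and> S \<subseteq> T \<longrightarrow> T = S) \<and> card S = Max (card ` {S. P S})"
proof -
  have "{S. P S} \<subseteq> Pow V" using sub by blast
  moreover have "finite (Pow V)" using fin by simp
  ultimately have ff: "finite {S. P S}" by (rule finite_subset)
  have "Max (card ` {S. P S}) \<in> card ` {S. P S}" using ff p0 by (intro Max_in) auto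
  then obtain S where S: "P S" "card S = Max (card ` {S. P S})" by auto
  have "T = S" if "P T" "S \<subseteq> T" for T
  proof -
    have "card T \<le> Max (card ` {S. P S})" using ff that(1) by (intro Max_ge) auto
    then have c1: "card T \<le> card S" using S(2) by simp
    have finT: "finite T" using sub[OF that(1)] fin by (rule finite_subset)
    have "card S \<le> card T" using finT that(2) by (rule card_mono)
    then have "card S = card T" using c1 by simp
    then have "S = T" using card_subset_eq[OF finT that(2)] by blast
    then show ?thesis by simp
  qed
  then show ?thesis using S by blast
qed


context
  fixes H :: "'a graph" and r :: nat
  assumes sg: "simple_graph H" and r1: "r \<ge> 1" and he: "has_edge H"
begin

lemma adjH: "adj H u v \<Longrightarrow> u \<in> verts H \<and> v \<in> verts H \<and> u \<noteq> v"
  using sg unfolding simple_graph_def by blast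

lemma indep_G: "independent (graph_join (edgeless r) H) (Inl ` X \<union> Inr ` Y) \<longleftrightarrow>
   X \<subseteq> {..<r} \<and> independent H Y \<and> (X = {} \<or> Y = {})"
proof
  assume a: "independent (graph_join (edgeless r) H) (Inl ` X \<union> Inr ` Y)"
  have s1: "X \<subseteq> {..<r}" "Y \<subseteq> verts H" using a unfolding independent_def by auto
  from a have n: "\<forall>p\<in>Inl ` X \<union> Inr ` Y. \<forall>q\<in>Inl ` X \<union> Inr ` Y. \<not> adj (graph_join (edgeless r) H) p q"
    unfolding independent_def by blast
  have s2: "\<not> adj H u v" if "u \<in> Y" "v \<in> Y" for u v
  proof -
    have "\<not> adj (graph_join (edgeless r) H) (Inr u) (Inr v)" using n that by blast
    then show ?thesis by simp
  qed
  have s3: "X = {} \<or> Y = {}"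
  proof (rule ccontr)
    assume "\<not> (X = {} \<or> Y = {})"
    then obtain x y where xy: "x \<in> X" "y \<in> Y" by auto
    then have "\<not> adj (graph_join (edgeless r) H) (Inl x) (Inr y)" using n by blast
    then show False using xy s1 by auto
  qed
  show "X \<subseteq> {..<r} \<and> independent H Y \<and> (X = {} \<or> Y = {})"
    using s1 s2 s3 unfolding independent_def by blast
next
  assume a: "X \<subseteq> {..<r} \<and> independent H Y \<and> (X = {} \<or> Y = {})"
  have "\<not> adj (graph_join (edgeless r) H) p q" if pq: "p \<in> Inl ` X \<union> Inr ` Y" "q \<in> Inl ` X \<union> Inr ` Y" for p q
  proof (cases "X = {}")
    case True
    then obtain u v where "p = Inr u" "q = Inr v" "u \<in> Y" "v \<in> Y" using pq by auto
    then show ?thesis using a unfolding independent_def by simp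
  next
    case False
    then have "Y = {}" using a by blast
    then obtain u v where "p = Inl u" "q = Inl v" using pq by auto
    then show ?thesis by simp
  qed
  moreover have "Inl ` X \<union> Inr ` Y \<subseteq> verts (graph_join (edgeless r) H)"
    using a unfolding independent_def by auto
  ultimately show "independent (graph_join (edgeless r) H) (Inl ` X \<union> Inr ` Y)"
    unfolding independent_def by blast
qed

lemma indep_G': "independent (graph_join (edgeless r) H) S \<longleftrightarrow>
   Inl -` S \<subseteq> {..<r} \<and> independent H (Inr -` S) \<and> (Inl -` S = {} \<or> Inr -` S = {})"
proof -
  have "independent (graph_join (edgeless r) H) S \<longleftrightarrow>
    independent (graph_join (edgeless r) H) (Inl ` (Inl -` S) \<union> Inr ` (Inr -` S))"
    by (rule arg_cong[OF decomp])
  then show ?thesis by (simp only: indep_G)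
qed

lemma bip_G: "bipartite_set (graph_join (edgeless r) H) (Inl ` X \<union> Inr ` Y) \<longleftrightarrow>
   X \<subseteq> {..<r} \<and> ((X = {} \<and> bipartite_set H Y) \<or> independent H Y)"
proof
  assume a: "bipartite_set (graph_join (edgeless r) H) (Inl ` X \<union> Inr ` Y)"
  then have "\<exists>A B. A \<union> B = Inl ` X \<union> Inr ` Y \<and> independent (graph_join (edgeless r) H) A \<and> independent (graph_join (edgeless r) H) B"
    unfolding bipartite_set_def by (rule conjunct2)
  then obtain A B where AB: "A \<union> B = Inl ` X \<union> Inr ` Y"
    and iA: "independent (graph_join (edgeless r) H) A" and iB: "independent (graph_join (edgeless r) H) B"
    by auto
  have "X = Inl -` (Inl ` X \<union> Inr ` Y)" by (rule preimg(1)[symmetric])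
  also have "\<dots> = Inl -` (A \<union> B)" by (simp only: AB)
  also have "\<dots> = Inl -` A \<union> Inl -` B" by (rule vimage_Un)
  finally have X: "X = Inl -` A \<union> Inl -` B" .
  have "Y = Inr -` (Inl ` X \<union> Inr ` Y)" by (rule preimg(2)[symmetric])
  also have "\<dots> = Inr -` (A \<union> B)" by (simp only: AB)
  also have "\<dots> = Inr -` A \<union> Inr -` B" by (rule vimage_Un)
  finally have Y: "Y = Inr -` A \<union> Inr -` B" .
  have A: "Inl -` A \<subseteq> {..<r}" "independent H (Inr -` A)" "Inl -` A = {} \<or> Inr -` A = {}"
    using iA[unfolded indep_G'] by blast+
  have B: "Inl -` B \<subseteq> {..<r}" "independent H (Inr -` B)" "Inl -` B = {} \<or> Inr -` B = {}"
    using iB[unfolded indep_G'] by blast+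
  have sub: "X \<subseteq> {..<r}" using X A(1) B(1) by blast
  show "X \<subseteq> {..<r} \<and> ((X = {} \<and> bipartite_set H Y) \<or> independent H Y)"
  proof (cases "X = {}")
    case True
    have "Y \<subseteq> verts H" using Y A(2) B(2) unfolding independent_def by blast
    then have "bipartite_set H Y" unfolding bipartite_set_def
      using Y A(2) B(2) by blast
    then show ?thesis using True sub by blast
  next
    case False
    then have "Inl -` A \<noteq> {} \<or> Inl -` B \<noteq> {}" using X by blast
    then have "Y = Inr -` B \<or> Y = Inr -` A" using Y A(3) B(3) by blast
    then have "independent H Y" using A(2) B(2) by metis
    then show ?thesis using sub by blast
  qed
next
  assume a: "X \<subseteq> {..<r} \<and> ((X = {} \<and> bipartite_set H Y) \<or> independent H Y)"
  show "bipartite_set (graph_join (edgeless r) H) (Inl ` X \<union> Inr ` Y)"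
  proof (cases "independent H Y")
    case True
    have i0: "independent H {}" unfolding independent_def by blast
    have "independent (graph_join (edgeless r) H) (Inl ` X \<union> Inr ` {})"
      using indep_G[of X "{}"] a i0 by blast
    then have 1: "independent (graph_join (edgeless r) H) (Inl ` X)" by simp
    have "independent (graph_join (edgeless r) H) (Inl ` {} \<union> Inr ` Y)"
      using indep_G[of "{}" Y] True by blast
    then have 2: "independent (graph_join (edgeless r) H) (Inr ` Y)" by simp
    have 3: "Inl ` X \<union> Inr ` Y \<subseteq> verts (graph_join (edgeless r) H)"
      using a True unfolding independent_def by auto
    show ?thesis unfolding bipartite_set_def using 1 2 3 by blast
  next
    case False
    then have X0: "X = {}" and "bipartite_set H Y" using a by auto
    then obtain A' B' where AB: "A' \<union> B' = Y" "independent H A'" "independent H B'"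
      unfolding bipartite_set_def by blast
    have "independent (graph_join (edgeless r) H) (Inl ` {} \<union> Inr ` A')"
      using indep_G[of "{}" A'] AB by blast
    then have 1: "independent (graph_join (edgeless r) H) (Inr ` A')" by simp
    have "independent (graph_join (edgeless r) H) (Inl ` {} \<union> Inr ` B')"
      using indep_G[of "{}" B'] AB by blast
    then have 2: "independent (graph_join (edgeless r) H) (Inr ` B')" by simp
    have 3: "Inr ` A' \<union> Inr ` B' = Inl ` X \<union> Inr ` Y"
    proof -
      have "Inr ` A' \<union> Inr ` B' = Inr ` (A' \<union> B')" by (rule image_Un[symmetric])
      also have "\<dots> = Inr ` Y" by (simp only: AB(1))
      also have "\<dots> = Inl ` X \<union> Inr ` Y" using X0 by simp
      finally show ?thesis .
    qed
    have 4: "Inl ` X \<union> Inr ` Y \<subseteq> verts (graph_join (edgeless r) H)"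
      unfolding 3[symmetric] using 1 2 unfolding independent_def by (intro Un_least) simp_all
    show ?thesis unfolding bipartite_set_def using 1 2 3 4 by blast
  qed
qed

lemma finH: "finite (verts H)" using sg unfolding simple_graph_def by blast

lemma maxbip_not_indep:
  assumes "maximal_bipartite_set H Y" shows "\<not> independent H Y"
proof
  assume iY: "independent H Y"
  have "verts H \<subseteq> Y"
  proof
    fix v assume v: "v \<in> verts H"
    have "independent H {v}" using v adjH unfolding independent_def by auto
    then have "bipartite_set H (Y \<union> {v})" using iY v unfolding bipartite_set_def independent_def
      by blast
    then have "Y \<union> {v} = Y" using assms unfolding maximal_bipartite_set_def by blast
    then show "v \<in> Y" by blast
  qed
  moreover obtain u v where "adj H u v" using he unfolding has_edge_def by blast
  ultimately show False using iY adjH unfolding independent_def by blast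
qed

lemma max_pair:
  "(X \<subseteq> {..<r} \<and> ((X = {} \<and> bipartite_set H Y) \<or> independent H Y)) \<and>
   (\<forall>X' Y'. (X' \<subseteq> {..<r} \<and> ((X' = {} \<and> bipartite_set H Y') \<or> independent H Y'))
       \<and> X \<subseteq> X' \<and> Y \<subseteq> Y' \<longrightarrow> X' = X \<and> Y' = Y)
   \<longleftrightarrow> (X = {..<r} \<and> maximal_independent H Y) \<or> (X = {} \<and> maximal_bipartite_set H Y)"
  (is "?Q X Y \<and> ?M \<longleftrightarrow> ?R")
proof
  assume a: "?Q X Y \<and> ?M"
  show ?R
  proof (cases "independent H Y")
    case True
    have "X = {..<r}" using a True by blast
    moreover have "maximal_independent H Y" unfolding maximal_independent_def
      using a True by blast
    ultimately show ?thesis by blast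
  next
    case False
    have "X = {}" "bipartite_set H Y" using a False by auto
    moreover have "maximal_bipartite_set H Y" unfolding maximal_bipartite_set_def
      using a calculation by blast
    ultimately show ?thesis by blast
  qed
next
  assume a: ?R
  show "?Q X Y \<and> ?M"
  proof (cases "X = {..<r} \<and> maximal_independent H Y")
    case True
    have ne: "{..<r} \<noteq> {}" using r1 by (metis lessThan_iff emptyE less_le_trans zero_less_one)
    show ?thesis using True ne unfolding maximal_independent_def by blast
  next
    case False
    then have X: "X = {}" and m: "maximal_bipartite_set H Y" using a by auto
    have ni: "\<not> independent H Y" using maxbip_not_indep m .
    have sub: "\<not> independent H Y'" if "Y \<subseteq> Y'" for Y'
      using ni that unfolding independent_def by blast
    show ?thesis using X m ni sub unfolding maximal_bipartite_set_def by blast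
  qed
qed

lemma maxG_char:
  "maximal_bipartite_set (graph_join (edgeless r) H) S \<longleftrightarrow>
    (\<exists>Y. maximal_independent H Y \<and> S = Inl ` {..<r} \<union> Inr ` Y) \<or>
    (\<exists>Y. maximal_bipartite_set H Y \<and> S = Inr ` Y)"
proof -
  let ?G = "graph_join (edgeless r) H"
  have eq: "maximal_bipartite_set ?G (Inl ` X \<union> Inr ` Y) \<longleftrightarrow>
     (X = {..<r} \<and> maximal_independent H Y) \<or> (X = {} \<and> maximal_bipartite_set H Y)" for X Y
  proof -
    have "maximal_bipartite_set ?G (Inl ` X \<union> Inr ` Y) \<longleftrightarrow>
      bipartite_set ?G (Inl ` X \<union> Inr ` Y) \<and>
      (\<forall>X' Y'. bipartite_set ?G (Inl ` X' \<union> Inr ` Y') \<and> X \<subseteq> X' \<and> Y \<subseteq> Y' \<longrightarrow> X' = X \<and> Y' = Y)"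
    proof
      assume m: "maximal_bipartite_set ?G (Inl ` X \<union> Inr ` Y)"
      show "bipartite_set ?G (Inl ` X \<union> Inr ` Y) \<and>
      (\<forall>X' Y'. bipartite_set ?G (Inl ` X' \<union> Inr ` Y') \<and> X \<subseteq> X' \<and> Y \<subseteq> Y' \<longrightarrow> X' = X \<and> Y' = Y)"
      proof (rule conjI)
        show "bipartite_set ?G (Inl ` X \<union> Inr ` Y)" using m unfolding maximal_bipartite_set_def by blast
      next
        show "\<forall>X' Y'. bipartite_set ?G (Inl ` X' \<union> Inr ` Y') \<and> X \<subseteq> X' \<and> Y \<subseteq> Y' \<longrightarrow> X' = X \<and> Y' = Y"
        proof (intro allI impI)
        fix X' Y' assume h: "bipartite_set ?G (Inl ` X' \<union> Inr ` Y') \<and> X \<subseteq> X' \<and> Y \<subseteq> Y'"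
        have "Inl ` X \<union> Inr ` Y \<subseteq> Inl ` X' \<union> Inr ` Y'" using h by blast
        then have e: "Inl ` X' \<union> Inr ` Y' = Inl ` X \<union> Inr ` Y"
          using m h unfolding maximal_bipartite_set_def by blast
        have "X' = Inl -` (Inl ` X' \<union> Inr ` Y')" by (rule preimg(1)[symmetric])
        also have "\<dots> = Inl -` (Inl ` X \<union> Inr ` Y)" by (simp only: e)
        also have "\<dots> = X" by (rule preimg(1))
        finally have 1: "X' = X" .
        have "Y' = Inr -` (Inl ` X' \<union> Inr ` Y')" by (rule preimg(2)[symmetric])
        also have "\<dots> = Inr -` (Inl ` X \<union> Inr ` Y)" by (simp only: e)
        also have "\<dots> = Y" by (rule preimg(2))
        finally show "X' = X \<and> Y' = Y" using 1 by simp
      qed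
      qed
    next
      assume m: "bipartite_set ?G (Inl ` X \<union> Inr ` Y) \<and>
      (\<forall>X' Y'. bipartite_set ?G (Inl ` X' \<union> Inr ` Y') \<and> X \<subseteq> X' \<and> Y \<subseteq> Y' \<longrightarrow> X' = X \<and> Y' = Y)"
      show "maximal_bipartite_set ?G (Inl ` X \<union> Inr ` Y)"
        unfolding maximal_bipartite_set_def
      proof (intro conjI allI impI)
        show "bipartite_set ?G (Inl ` X \<union> Inr ` Y)" using m by blast
      next
        fix T assume h: "bipartite_set ?G T \<and> Inl ` X \<union> Inr ` Y \<subseteq> T"
        have T: "T = Inl ` (Inl -` T) \<union> Inr ` (Inr -` T)" by (rule decomp)
        have s: "X \<subseteq> Inl -` T" "Y \<subseteq> Inr -` T" using h by auto
        have "bipartite_set ?G (Inl ` (Inl -` T) \<union> Inr ` (Inr -` T))" using h T[symmetric] by simp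
        then have e: "Inl -` T = X" "Inr -` T = Y" using m s by blast+
        have "T = Inl ` (Inl -` T) \<union> Inr ` (Inr -` T)" by (rule decomp)
        also have "\<dots> = Inl ` X \<union> Inr ` Y" by (simp only: e)
        finally show "T = Inl ` X \<union> Inr ` Y" .
      qed
    qed
    also have "\<dots> \<longleftrightarrow> (X = {..<r} \<and> maximal_independent H Y) \<or> (X = {} \<and> maximal_bipartite_set H Y)"
      unfolding bip_G by (rule max_pair)
    finally show ?thesis .
  qed
  show ?thesis
  proof
    assume "maximal_bipartite_set ?G S"
    then have "maximal_bipartite_set ?G (Inl ` (Inl -` S) \<union> Inr ` (Inr -` S))"
      by (rule iffD1[OF arg_cong[OF decomp[of S], of "maximal_bipartite_set ?G"]])
    then have "(Inl -` S = {..<r} \<and> maximal_independent H (Inr -` S)) \<or>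
       (Inl -` S = {} \<and> maximal_bipartite_set H (Inr -` S))" by (simp only: eq)
    then show "(\<exists>Y. maximal_independent H Y \<and> S = Inl ` {..<r} \<union> Inr ` Y) \<or>
    (\<exists>Y. maximal_bipartite_set H Y \<and> S = Inr ` Y)"
    proof
      assume c: "Inl -` S = {..<r} \<and> maximal_independent H (Inr -` S)"
      have "S = Inl ` (Inl -` S) \<union> Inr ` (Inr -` S)" by (rule decomp)
      also have "\<dots> = Inl ` {..<r} \<union> Inr ` (Inr -` S)" using c by (simp only:)
      finally show ?thesis using c by blast
    next
      assume c: "Inl -` S = {} \<and> maximal_bipartite_set H (Inr -` S)"
      have "S = Inl ` (Inl -` S) \<union> Inr ` (Inr -` S)" by (rule decomp)
      also have "\<dots> = Inr ` (Inr -` S)" using c by (simp only: image_empty Un_empty_left)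
      finally show ?thesis using c by blast
    qed
  next
    assume "(\<exists>Y. maximal_independent H Y \<and> S = Inl ` {..<r} \<union> Inr ` Y) \<or>
    (\<exists>Y. maximal_bipartite_set H Y \<and> S = Inr ` Y)"
    then show "maximal_bipartite_set ?G S"
    proof
      assume "\<exists>Y. maximal_independent H Y \<and> S = Inl ` {..<r} \<union> Inr ` Y"
      then obtain Y where "maximal_independent H Y" "S = Inl ` {..<r} \<union> Inr ` Y" by blast
      then show ?thesis using eq[of "{..<r}" Y] by simp
    next
      assume "\<exists>Y. maximal_bipartite_set H Y \<and> S = Inr ` Y"
      then obtain Y where "maximal_bipartite_set H Y" "S = Inr ` Y" by blast
      then show ?thesis using eq[of "{}" Y] by simp
    qed
  qed
qed

end

theorem mainTheorem3:
  fixes H :: "'a graph" and r :: nat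
  assumes "r \<ge> 1" and "simple_graph H" and "has_edge H"
  shows "well_bicovered (graph_join (edgeless r) H) \<longleftrightarrow>
           (well_covered H \<and> well_bicovered H \<and> bip_num H = r + alpha H)"
proof -
  let ?G = "graph_join (edgeless r) H"
  note ch = maxG_char[OF assms(2,1,3)]
  have fin: "finite (verts H)" using finH[OF assms(2,1,3)] .
  have finI: "finite Y" if "maximal_independent H Y" for Y
    using that fin unfolding maximal_independent_def independent_def by (meson rev_finite_subset)
  have c1: "card (Inl ` {..<r} \<union> Inr ` Y) = r + card Y" if "finite Y" for Y :: "'a set"
  proof -
    have "card (Inl ` {..<r} \<union> Inr ` Y) = card (Inl ` {..<r} :: (nat + 'a) set) + card (Inr ` Y :: (nat + 'a) set)"
      using that by (intro card_Un_disjoint) auto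
    also have "\<dots> = r + card Y" by (simp add: card_image)
    finally show ?thesis .
  qed
  have c2: "card (Inr ` Y :: (nat + 'a) set) = card Y" for Y :: "'a set" by (simp add: card_image)
  have m1: "maximal_bipartite_set ?G (Inl ` {..<r} \<union> Inr ` I)" if "maximal_independent H I" for I
    unfolding ch using that by blast
  have m2: "maximal_bipartite_set ?G (Inr ` T)" if "maximal_bipartite_set H T" for T
    unfolding ch using that by blast
  have "\<exists>S. independent H S \<and> (\<forall>T. independent H T \<and> S \<subseteq> T \<longrightarrow> T = S) \<and> card S = alpha H"
  proof -
    have i0: "independent H {}" unfolding independent_def by blast
    show ?thesis unfolding alpha_def by (rule max_attained[where P="independent H" and Z="{}", OF fin _ i0]) (simp add: independent_def)
  qed
  then obtain I0 where I0: "maximal_independent H I0" "card I0 = alpha H"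
    unfolding maximal_independent_def by blast
  have "\<exists>S. bipartite_set H S \<and> (\<forall>T. bipartite_set H T \<and> S \<subseteq> T \<longrightarrow> T = S) \<and> card S = bip_num H"
  proof -
    have b0: "bipartite_set H {}" unfolding bipartite_set_def independent_def by blast
    show ?thesis unfolding bip_num_def by (rule max_attained[where P="bipartite_set H" and Z="{}", OF fin _ b0]) (simp add: bipartite_set_def)
  qed
  then obtain T0 where T0: "maximal_bipartite_set H T0" "card T0 = bip_num H"
    unfolding maximal_bipartite_set_def by blast
  show ?thesis
  proof
    assume w: "well_bicovered ?G"
    have key: "card S = bip_num H" if "maximal_bipartite_set ?G S" for S
    proof -
      have "card S = card (Inr ` T0 :: (nat + 'a) set)"
        using w that m2[OF T0(1)] unfolding well_bicovered_def by blast
      then show ?thesis using c2 T0(2) by simp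
    qed
    have kI: "r + card I = bip_num H" if "maximal_independent H I" for I
      using key[OF m1[OF that]] c1[OF finI[OF that]] by simp
    have "bip_num H = r + alpha H" using kI[OF I0(1)] I0(2) by simp
    moreover have "well_covered H" unfolding well_covered_def
    proof (intro allI impI)
      fix S assume "maximal_independent H S"
      from kI[OF this] kI[OF I0(1)] I0(2) show "card S = alpha H" by simp
    qed
    moreover have "well_bicovered H" unfolding well_bicovered_def
    proof (intro allI impI)
      fix S T assume st: "maximal_bipartite_set H S \<and> maximal_bipartite_set H T"
      have "card (Inr ` S :: (nat + 'a) set) = bip_num H" using st m2 key by blast
      moreover have "card (Inr ` T :: (nat + 'a) set) = bip_num H" using st m2 key by blast
      ultimately show "card S = card T" using c2 by simp
    qed
    ultimately show "well_covered H \<and> well_bicovered H \<and> bip_num H = r + alpha H" by blast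
  next
    assume a: "well_covered H \<and> well_bicovered H \<and> bip_num H = r + alpha H"
    have key: "card S = bip_num H" if "maximal_bipartite_set ?G S" for S
    proof -
      from that[unfolded ch] consider (i) I where "maximal_independent H I" "S = Inl ` {..<r} \<union> Inr ` I"
        | (b) T where "maximal_bipartite_set H T" "S = Inr ` T" by blast
      then show ?thesis
      proof cases
        case i
        then have "card S = r + card I" using c1 finI by simp
        moreover have "card I = alpha H" using a i unfolding well_covered_def by blast
        ultimately show ?thesis using a by simp
      next
        case b
        then have "card S = card T" using c2 by simp
        moreover have "card T = card T0" using a b T0 unfolding well_bicovered_def by blast
        ultimately show ?thesis using T0 by simp
      qed
    qed
    then show "well_bicovered ?G" unfolding well_bicovered_def by simp
  qed
qed

end
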